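(* Consider the ring $S=\mathbb{F}_{p^m}[x]/\langle x^{4p^s}-\alpha\rangle$. Then: (a) $S$ has exactly two maximal ideals, $\langle x^2+\gamma x+\frac{\gamma^2}{2}\rangle$ and $\langle x^2-\gamma x+\frac{\gamma^2}{2}\rangle$; (b) the ideals of $S$ are exactly $\left\langle \left(x^2+\gamma x+\frac{\gamma^2}{2}\right)^i\left(x^2-\gamma x+\frac{\gamma^2}{2}\right)^j\right\rangle$ with $0\le i,j\le p^s$, and such an ideal has $p^{m(4p^s-2i-2j)}$ elements; (c) the set of nilpotent elements of $S$ is $\langle x^4-\alpha_0\rangle$; (d) the set of non-units of $S$ is $\langle x^2+\gamma x+\frac{\gamma^2}{2}\rangle\cup\langle x^2-\gamma x+\frac{\gamma^2}{2}\rangle$.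
   Context: Let $p$ be an odd prime and $m,s$ positive integers with $p^m\equiv 3\pmod 4$; $\mathbb{F}_{p^m}$ is the field with $p^m$ elements. Fix $\alpha\in\mathbb{F}_{p^m}\setminus\{0\}$ that is not a square in $\mathbb{F}_{p^m}$, let $\alpha_0\in\mathbb{F}_{p^m}$ satisfy $\alpha_0^{p^s}=\alpha$, and let $\gamma\in\mathbb{F}_{p^m}$ satisfy $\gamma^4+4\alpha_0=0$. *)

theory Defs
  imports "HOL-Algebra.Ideal" "HOL-Computational_Algebra.Polynomial"
begin

text \<open>The residue ring k[x]/<f>, represented concretely by the remainders
  modulo f (polynomials of degree < degree f), with multiplication modulo f.\<close>
definition quot_poly_ring :: "'a::field poly \<Rightarrow> 'a poly ring" where
  "quot_poly_ring f = \<lparr>carrier = {g. degree g < degree f},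
      monoid.mult = (\<lambda>a b. (a * b) mod f), one = 1 mod f,
      zero = 0, add = (+)\<rparr>"

definition nilpotents :: "('a, 'b) ring_scheme \<Rightarrow> 'a set" where
  "nilpotents R = {a \<in> carrier R. \<exists>n::nat. a [^]\<^bsub>R\<^esub> n = \<zero>\<^bsub>R\<^esub>}"

end

theory Submission
  imports Defs "HOL-Computational_Algebra.Primes"
begin

definition PI :: "'a::field poly \<Rightarrow> 'a poly \<Rightarrow> 'a poly set" where
  "PI f h = {(r * h) mod f | r. True}"

definition Jd :: "'a::field poly \<Rightarrow> 'a poly \<Rightarrow> 'a poly set" where
  "Jd f d = {g. degree g < degree f \<and> d dvd g}"

context
  fixes f :: "'a::field poly"
  assumes degf: "degree f > 0"
begin

lemma f_nz: "f \<noteq> 0" using degf by auto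

lemma S_simps:
  "carrier (quot_poly_ring f) = {g. degree g < degree f}"
  "a \<otimes>\<^bsub>quot_poly_ring f\<^esub> b = (a * b) mod f"
  "\<one>\<^bsub>quot_poly_ring f\<^esub> = 1"
  "\<zero>\<^bsub>quot_poly_ring f\<^esub> = 0"
  "a \<oplus>\<^bsub>quot_poly_ring f\<^esub> b = a + b"
  using degf by (auto simp: quot_poly_ring_def mod_poly_less)

lemma mod_deg: "degree (a mod f) < degree f"
  using degree_mod_less[OF f_nz, of a] degf by auto

lemma S_cring: "cring (quot_poly_ring f)"
proof (rule cringI)
  show "abelian_group (quot_poly_ring f)"
    apply (rule abelian_groupI)
    apply (simp_all add: S_simps degf)
    apply (metis degree_add_le_max max_less_iff_conj order_le_less_trans)
    apply (rule_tac x="-x" in exI) apply simp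
    done
  show "comm_monoid (quot_poly_ring f)"
  proof (rule comm_monoidI)
    show "x \<otimes>\<^bsub>quot_poly_ring f\<^esub> y \<in> carrier (quot_poly_ring f)" for x y
      by (simp add: S_simps mod_deg)
    show "\<one>\<^bsub>quot_poly_ring f\<^esub> \<in> carrier (quot_poly_ring f)" using degf by (simp add: S_simps)
    show "x \<otimes>\<^bsub>quot_poly_ring f\<^esub> y \<otimes>\<^bsub>quot_poly_ring f\<^esub> z =
          x \<otimes>\<^bsub>quot_poly_ring f\<^esub> (y \<otimes>\<^bsub>quot_poly_ring f\<^esub> z)" for x y z
    proof -
      have "(x * y mod f) * z mod f = x * y * z mod f" by (rule mod_mult_left_eq)
      also have "\<dots> = x * (y * z mod f) mod f" by (simp add: mod_mult_right_eq mult.assoc)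
      finally show ?thesis by (simp add: S_simps)
    qed
    show "\<one>\<^bsub>quot_poly_ring f\<^esub> \<otimes>\<^bsub>quot_poly_ring f\<^esub> x = x" if "x \<in> carrier (quot_poly_ring f)" for x
      using that by (simp add: S_simps mod_poly_less)
    show "x \<otimes>\<^bsub>quot_poly_ring f\<^esub> y = y \<otimes>\<^bsub>quot_poly_ring f\<^esub> x" for x y
      by (simp add: S_simps mult.commute)
  qed
  show "\<And>x y z. x \<in> carrier (quot_poly_ring f) \<Longrightarrow> y \<in> carrier (quot_poly_ring f) \<Longrightarrow>
      z \<in> carrier (quot_poly_ring f) \<Longrightarrow>
     (x \<oplus>\<^bsub>quot_poly_ring f\<^esub> y) \<otimes>\<^bsub>quot_poly_ring f\<^esub> z =
     x \<otimes>\<^bsub>quot_poly_ring f\<^esub> z \<oplus>\<^bsub>quot_poly_ring f\<^esub> y \<otimes>\<^bsub>quot_poly_ring f\<^esub> z"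
    by (simp add: S_simps distrib_right poly_mod_add_left)
qed

lemma S_ainv: "a \<in> carrier (quot_poly_ring f) \<Longrightarrow> \<ominus>\<^bsub>quot_poly_ring f\<^esub> a = - a"
proof -
  interpret cring "quot_poly_ring f" by (rule S_cring)
  assume a: "a \<in> carrier (quot_poly_ring f)"
  show ?thesis by (rule minus_equality) (use a in \<open>auto simp: S_simps\<close>)
qed

lemma S_pow: "a [^]\<^bsub>quot_poly_ring f\<^esub> (n::nat) = a ^ n mod f"
proof (induction n)
  case 0 then show ?case using degf by (simp add: S_simps mod_poly_less)
next
  case (Suc n)
  have "a [^]\<^bsub>quot_poly_ring f\<^esub> Suc n = (a ^ n mod f) * a mod f" using Suc by (simp add: S_simps)
  also have "\<dots> = a ^ n * a mod f" by (rule mod_mult_left_eq)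
  finally show ?case by (metis power_Suc2)
qed

lemma modd: "f dvd (X mod f - X)"
  by (simp add: mod_eq_dvd_iff[symmetric])

lemma small_dvd: "degree h < degree f \<Longrightarrow> f dvd h \<Longrightarrow> h = 0"
  using dvd_imp_degree_le f_nz by fastforce

lemma cong_small: "degree a < degree f \<Longrightarrow> degree b < degree f \<Longrightarrow> f dvd (a - b) \<Longrightarrow> a = b"
  using small_dvd[of "a - b"] degree_diff_less by fastforce

lemma J_ideal:
  assumes "d dvd f" shows "ideal (Jd f d) (quot_poly_ring f)"
proof -
  interpret cring "quot_poly_ring f" by (rule S_cring)
  have sub: "subgroup (Jd f d) (add_monoid (quot_poly_ring f))"
  proof (rule subgroup.intro)
    show "Jd f d \<subseteq> carrier (add_monoid (quot_poly_ring f))" by (auto simp: Jd_def S_simps)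
    show "x \<otimes>\<^bsub>add_monoid (quot_poly_ring f)\<^esub> y \<in> Jd f d" if "x \<in> Jd f d" "y \<in> Jd f d" for x y
      using that by (auto simp: Jd_def S_simps degf degree_add_less)
    show "\<one>\<^bsub>add_monoid (quot_poly_ring f)\<^esub> \<in> Jd f d" by (simp add: Jd_def S_simps degf)
    show "inv\<^bsub>add_monoid (quot_poly_ring f)\<^esub> x \<in> Jd f d" if "x \<in> Jd f d" for x
    proof -
      have "inv\<^bsub>add_monoid (quot_poly_ring f)\<^esub> x = - x"
        using that S_ainv[of x] by (simp add: a_inv_def Jd_def S_simps)
      then show ?thesis using that by (simp add: Jd_def)
    qed
  qed
  show ?thesis
  proof (rule idealI[OF ring_axioms sub])
    show "x \<otimes>\<^bsub>quot_poly_ring f\<^esub> a \<in> Jd f d" if "a \<in> Jd f d" "x \<in> carrier (quot_poly_ring f)" for a x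
      using that assms by (auto simp: Jd_def S_simps mod_deg intro!: dvd_mod)
    show "a \<otimes>\<^bsub>quot_poly_ring f\<^esub> x \<in> Jd f d" if "a \<in> Jd f d" "x \<in> carrier (quot_poly_ring f)" for a x
      using that assms by (auto simp: Jd_def S_simps mod_deg intro!: dvd_mod)
  qed
qed

lemma ideal_J:
  assumes "ideal I (quot_poly_ring f)"
  shows "\<exists>d. d dvd f \<and> d \<noteq> 0 \<and> I = Jd f d"
proof -
  interpret ideal I "quot_poly_ring f" by fact
  have Icar: "g \<in> I \<Longrightarrow> degree g < degree f" for g using a_subset by (auto simp: S_simps)
  have mulI: "(r * g) mod f \<in> I" if "g \<in> I" for r g
  proof -
    have "(r mod f) \<otimes>\<^bsub>quot_poly_ring f\<^esub> g \<in> I"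
      by (rule I_l_closed[OF that]) (simp add: S_simps mod_deg)
    then show ?thesis by (simp add: S_simps mod_mult_left_eq)
  qed
  have negI: "- g \<in> I" if "g \<in> I" for g
    using additive_subgroup.a_inv_closed[OF is_additive_subgroup that] S_ainv[of g] Icar[OF that] by (simp add: S_simps)
  have diffI: "g - h \<in> I" if "g \<in> I" "h \<in> I" for g h
    using additive_subgroup.a_closed[OF is_additive_subgroup that(1) negI[OF that(2)]] by (simp add: S_simps)
  show ?thesis
  proof (cases "I = {0}")
    case True
    have "Jd f f = {0}" using small_dvd by (auto simp: Jd_def degf)
    then show ?thesis using True f_nz by (intro exI[of _ f]) auto
  next
    case False
    then obtain g0 where g0: "g0 \<in> I - {0}" using additive_subgroup.zero_closed[OF is_additive_subgroup] by (auto simp: S_simps)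
    obtain d where d: "d \<in> I - {0}" and dmin: "\<And>e. e \<in> I - {0} \<Longrightarrow> degree d \<le> degree e"
      using ex_has_least_nat[of "\<lambda>g. g \<in> I - {0}" g0 degree] g0 by blast
    have dd: "degree d < degree f" using d Icar by auto
    have key: "g mod d \<in> I" if "g \<in> I" "degree g < degree f" for g
    proof -
      define q where "q = g div d"
      have "g - (q * d) mod f \<in> I" using diffI[OF that(1) mulI[OF d[THEN DiffD1]]] .
      moreover have "g mod d = g - (q * d) mod f"
      proof (rule cong_small)
        show "degree (g mod d) < degree f"
          using degree_mod_less[of d g] d dd degf by auto
        show "degree (g - q * d mod f) < degree f"
          using that(2) mod_deg degree_diff_less by blast
        have "g mod d = g - q * d" unfolding q_def by (simp add: minus_div_mult_eq_mod)
        then have "g mod d - (g - q * d mod f) = q * d mod f - q * d" by (simp add: algebra_simps)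
        then show "f dvd g mod d - (g - q * d mod f)" by (metis modd)
      qed
      ultimately show ?thesis by simp
    qed
    have dvdI: "d dvd g" if "g \<in> I" for g
    proof (rule ccontr)
      assume "\<not> d dvd g"
      then have "g mod d \<noteq> 0" by (simp add: mod_eq_0_iff_dvd)
      then have "degree (g mod d) < degree d" using degree_mod_less'[of d g] d by auto
      then show False using dmin[of "g mod d"] key[OF that Icar[OF that]] \<open>g mod d \<noteq> 0\<close> by auto
    qed
    have "d dvd f"
    proof -
      have "0 - (f div d * d) mod f \<in> I" using diffI[OF additive_subgroup.zero_closed[OF is_additive_subgroup, simplified S_simps] mulI[OF d[THEN DiffD1]]] by (simp add: S_simps)
      moreover have "f mod d = 0 - (f div d * d) mod f"
      proof (rule cong_small)
        show "degree (f mod d) < degree f"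
          using degree_mod_less[of d f] d dd degf by auto
        show "degree (0 - (f div d * d) mod f) < degree f"
          using mod_deg by simp
        have "f mod d = f - f div d * d" by (simp add: minus_div_mult_eq_mod)
        then have "f mod d - (0 - (f div d * d) mod f) = f + ((f div d * d) mod f - f div d * d)" by (simp add: algebra_simps)
        then show "f dvd f mod d - (0 - (f div d * d) mod f)" by (metis modd dvd_add dvd_refl)
      qed
      ultimately have "f mod d \<in> I" by simp
      then have "d dvd f mod d" by (rule dvdI)
      then show ?thesis by (simp add: dvd_mod_iff)
    qed
    moreover have "I = Jd f d"
    proof
      show "I \<subseteq> Jd f d" using dvdI Icar by (auto simp: Jd_def)
      show "Jd f d \<subseteq> I"
      proof
        fix g assume g: "g \<in> Jd f d"
        then obtain k where k: "g = d * k" by (auto simp: Jd_def elim: dvdE)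
        have "(k * d) mod f \<in> I" using mulI d by auto
        moreover have "(k * d) mod f = g" using g k by (simp add: Jd_def mod_poly_less mult.commute)
        ultimately show "g \<in> I" by simp
      qed
    qed
    ultimately show ?thesis using d by auto
  qed
qed

lemma PI_ideal: "ideal (PI f h) (quot_poly_ring f)"
proof -
  interpret cring "quot_poly_ring f" by (rule S_cring)
  have sub: "subgroup (PI f h) (add_monoid (quot_poly_ring f))"
  proof (rule subgroup.intro)
    show "PI f h \<subseteq> carrier (add_monoid (quot_poly_ring f))" by (auto simp: PI_def S_simps mod_deg)
    show "x \<otimes>\<^bsub>add_monoid (quot_poly_ring f)\<^esub> y \<in> PI f h" if xP: "x \<in> PI f h" and yP: "y \<in> PI f h" for x y
    proof -
      obtain r where "x = (r*h) mod f" using xP unfolding PI_def by blast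
      moreover obtain s where "y = (s*h) mod f" using yP unfolding PI_def by blast
      ultimately
      have "x + y = ((r+s)*h) mod f"
      proof -
        assume xr: "x = (r*h) mod f" and ys: "y = (s*h) mod f"
        have "degree (x + y) < degree f" using xr ys mod_deg degree_add_less by blast
        then have "x + y = (x + y) mod f" by (simp add: mod_poly_less)
        also have "\<dots> = ((r+s)*h) mod f" unfolding xr ys by (simp add: mod_add_eq distrib_right)
        finally show ?thesis .
      qed
      then show ?thesis by (auto simp: PI_def S_simps)
    qed
    show "\<one>\<^bsub>add_monoid (quot_poly_ring f)\<^esub> \<in> PI f h" by (auto simp: PI_def S_simps intro!: exI[of _ 0])
    show "inv\<^bsub>add_monoid (quot_poly_ring f)\<^esub> x \<in> PI f h" if xP: "x \<in> PI f h" for x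
    proof -
      obtain r where r: "x = (r*h) mod f" using xP unfolding PI_def by blast
      have "inv\<^bsub>add_monoid (quot_poly_ring f)\<^esub> x = - x"
        using r S_ainv[of x] by (simp add: a_inv_def S_simps mod_deg)
      also have "- x = ((-r)*h) mod f"
      proof -
        have "- x = (- x) mod f" using r mod_deg by (simp add: mod_poly_less)
        also have "\<dots> = (- (r*h)) mod f" unfolding r by (rule mod_minus_eq)
        finally show ?thesis by simp
      qed
      finally have "inv\<^bsub>add_monoid (quot_poly_ring f)\<^esub> x = ((-r)*h) mod f" .
      then show ?thesis unfolding PI_def by blast
    qed
  qed
  show ?thesis
  proof (rule idealI[OF ring_axioms sub])
    show "x \<otimes>\<^bsub>quot_poly_ring f\<^esub> a \<in> PI f h" if aP: "a \<in> PI f h" and "x \<in> carrier (quot_poly_ring f)" for a x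
    proof -
      obtain r where r: "a = (r*h) mod f" using aP unfolding PI_def by blast
      have "x * a mod f = ((x*r)*h) mod f" unfolding r by (simp add: mod_mult_right_eq mult.assoc)
      then show ?thesis by (auto simp: PI_def S_simps)
    qed
    show "a \<otimes>\<^bsub>quot_poly_ring f\<^esub> x \<in> PI f h" if aP: "a \<in> PI f h" and "x \<in> carrier (quot_poly_ring f)" for a x
    proof -
      obtain r where r: "a = (r*h) mod f" using aP unfolding PI_def by blast
      have "a * x mod f = (r*h*x) mod f" unfolding r by (rule mod_mult_left_eq)
      also have "\<dots> = ((x*r)*h) mod f" by (simp add: ac_simps)
      finally have "a * x mod f = ((x*r)*h) mod f" .
      then show ?thesis by (auto simp: PI_def S_simps)
    qed
  qed
qed

lemma Idl_eq':
  assumes e: "e dvd f"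
  shows "Idl\<^bsub>quot_poly_ring f\<^esub> {e mod f} = Jd f e"
proof -
  interpret cring "quot_poly_ring f" by (rule S_cring)
  have hc: "e mod f \<in> carrier (quot_poly_ring f)" by (simp add: S_simps mod_deg)
  show ?thesis
  proof
    show "Idl\<^bsub>quot_poly_ring f\<^esub> {e mod f} \<subseteq> Jd f e"
      by (rule genideal_minimal[OF J_ideal[OF e]]) (auto simp: Jd_def mod_deg intro!: dvd_mod e)
    obtain d where d: "d dvd f" "Idl\<^bsub>quot_poly_ring f\<^esub> {e mod f} = Jd f d"
      using ideal_J[OF genideal_ideal[of "{e mod f}"]] hc by auto
    have "e mod f \<in> Jd f d" using genideal_self'[OF hc] d by simp
    then have "d dvd e mod f" by (auto simp: Jd_def)
    then have "d dvd e" using d(1) by (metis dvd_mod_iff)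
    then show "Jd f e \<subseteq> Idl\<^bsub>quot_poly_ring f\<^esub> {e mod f}"
      using d by (auto simp: Jd_def intro: dvd_trans)
  qed
qed

lemma coeff_sum_monom: "coeff (\<Sum>i<n. monom (h i) i) j = (if j < n then (h j::'a::field) else 0)"
  apply (subst coeff_sum)
  apply (simp only: coeff_monom)
  apply (simp add: sum.delta)
  done

lemma card_P:
  assumes "finite (UNIV :: 'a set)"
  shows "card {k::'a poly. \<forall>i\<ge>n. coeff k i = 0} = card (UNIV :: 'a set) ^ n"
proof -
  let ?F = "\<lambda>h::nat \<Rightarrow> 'a. \<Sum>i<n. monom (h i) i"
  let ?P = "{k::'a poly. \<forall>i\<ge>n. coeff k i = 0}"
  let ?A = "PiE {..<n} (\<lambda>_. UNIV :: 'a set)"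
  have coeffF: "coeff (?F h) j = (if j < n then h j else 0)" for h j
    by (rule coeff_sum_monom)
  have "bij_betw ?F ?A ?P"
  proof (rule bij_betw_imageI)
    show "inj_on ?F ?A"
    proof
      fix h h' assume h: "h \<in> ?A" "h' \<in> ?A" "?F h = ?F h'"
      show "h = h'"
      proof
        fix j show "h j = h' j"
        proof (cases "j < n")
          case True
          have "coeff (?F h) j = coeff (?F h') j" using h(3) by (rule arg_cong)
          then show ?thesis unfolding coeffF using True by simp
        next
          case False then show ?thesis using PiE_arb[OF h(1)] PiE_arb[OF h(2)] by simp
        qed
      qed
    qed
    show "?F ` ?A = ?P"
    proof
      show "?F ` ?A \<subseteq> ?P"
      proof (rule image_subsetI)
        fix h assume "h \<in> ?A" show "?F h \<in> ?P" by (simp add: coeffF)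
      qed
      show "?P \<subseteq> ?F ` ?A"
      proof
        fix k assume k: "k \<in> ?P"
        have "?F (restrict (coeff k) {..<n}) = k"
          by (rule poly_eqI) (use k in \<open>auto simp: coeffF\<close>)
        then show "k \<in> ?F ` ?A"
          by (intro image_eqI[where x="restrict (coeff k) {..<n}" and f="?F"]) simp_all
      qed
    qed
  qed
  then have "card ?P = card ?A" by (simp add: bij_betw_same_card)
  also have "\<dots> = card (UNIV :: 'a set) ^ n" by (simp add: card_PiE)
  finally show ?thesis .
qed

lemma card_J:
  assumes fin: "finite (UNIV :: 'a set)" and e: "e dvd f"
  shows "card (Jd f e) = card (UNIV :: 'a set) ^ (degree f - degree e)"
proof -
  have enz: "e \<noteq> 0" using e f_nz by auto
  have edeg: "degree e \<le> degree f" by (rule dvd_imp_degree_le[OF e f_nz])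
  let ?P = "{k::'a poly. \<forall>i\<ge>degree f - degree e. coeff k i = 0}"
  have "Jd f e = (\<lambda>k. e * k) ` ?P"
  proof
    show "Jd f e \<subseteq> (\<lambda>k. e * k) ` ?P"
    proof
      fix g assume g: "g \<in> Jd f e"
      then obtain k where k: "g = e * k" by (auto simp: Jd_def elim: dvdE)
      have kP: "k \<in> ?P"
      proof (cases "k = 0")
        case False
        have "degree g = degree e + degree k" using k enz False by (simp add: degree_mult_eq)
        then have "degree k < degree f - degree e" using g by (auto simp: Jd_def)
        then show ?thesis by (auto intro: coeff_eq_0)
      qed simp
      show "g \<in> (\<lambda>k. e * k) ` ?P" by (rule image_eqI[where x=k]) (use k kP in simp_all)
    qed
    show "(\<lambda>k. e * k) ` ?P \<subseteq> Jd f e"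
    proof
      fix g assume "g \<in> (\<lambda>k. e * k) ` ?P"
      then obtain k where k: "g = e * k" "k \<in> ?P" by blast
      show "g \<in> Jd f e"
      proof (cases "k = 0")
        case True then show ?thesis using k degf by (simp add: Jd_def)
      next
        case False
        have "degree k < degree f - degree e"
        proof (rule ccontr)
          assume "\<not> ?thesis"
          then have "coeff k (degree k) = 0" using k(2) by auto
          then show False using False by simp
        qed
        then show ?thesis using k enz False edeg by (simp add: Jd_def degree_mult_eq)
      qed
    qed
  qed
  moreover have "inj_on (\<lambda>k. e * k) ?P" by (rule inj_onI) (use enz in simp)
  ultimately have "card (Jd f e) = card ?P" by (simp add: card_image)
  then show ?thesis using card_P[OF fin] by simp
qed

end

lemma prime_g:
  fixes g :: "'a::field poly"
  assumes dg: "degree g = 2" and nr: "\<forall>r. poly g r \<noteq> 0" and dv: "g dvd x * y"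
  shows "g dvd x \<or> g dvd y"
proof (cases "g dvd x")
  case True then show ?thesis ..
next
  case False
  note nx = False
  have dgp: "degree g > 0" using dg by simp
  obtain d where d: "d dvd g" "d \<noteq> 0" "PI g x = Jd g d"
    using ideal_J[OF dgp PI_ideal[OF dgp]] by blast
  have gnz: "g \<noteq> 0" using dg by auto
  have "degree d \<le> 2" using d gnz dvd_imp_degree_le dg by fastforce
  moreover have "degree d \<noteq> 1"
  proof
    assume d1: "degree d = 1"
    have "coeff d 1 \<noteq> 0" using d1 by (metis leading_coeff_0_iff zero_neq_one degree_0)
    then have "poly d (- coeff d 0 / coeff d 1) = 0"
      using d1 by (simp add: poly_altdef field_simps)
    moreover obtain k where "g = d * k" using d by (auto elim: dvdE)
    ultimately show False using nr by auto
  qed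
  moreover have "degree d \<noteq> 2"
  proof
    assume d2: "degree d = 2"
    obtain k where k: "g = d * k" using d by (auto elim: dvdE)
    have "k \<noteq> 0" using k gnz by auto
    then have "degree k = 0" using k d2 dg d by (simp add: degree_mult_eq)
    then obtain c where c: "k = [:c:]" by (auto elim: degree_eq_zeroE)
    have cnz: "c \<noteq> 0" using c \<open>k \<noteq> 0\<close> by auto
    have "x mod g \<in> PI g x" unfolding PI_def by (simp, rule exI[of _ 1], simp)
    then have "d dvd x mod g" using d by (auto simp: Jd_def)
    then have "d dvd x" using d(1) by (metis dvd_mod_iff)
    then obtain m where "x = d * m" by (auto elim: dvdE)
    then have "x = g * [:1/c:] * m" using k c cnz by (simp add: mult.assoc)
    then show False using nx by (metis dvd_mult2 dvd_refl mult.assoc)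
  qed
  ultimately have "degree d = 0" by linarith
  then obtain c where c: "d = [:c:]" by (auto elim: degree_eq_zeroE)
  have cnz: "c \<noteq> 0" using c d by auto
  have "1 \<in> Jd g d" using c cnz dg by (auto simp: Jd_def intro!: dvdI[of _ _ "[:1/c:]"])
  then have "1 \<in> PI g x" using d(3) by simp
  then obtain r where r: "1 = (r * x) mod g" unfolding PI_def by blast
  have "1 mod g = 1" using dg by (simp add: mod_poly_less)
  then have "g dvd r * x - 1" using r by (metis mod_eq_dvd_iff)
  then have "g dvd (r * x - 1) * y" by simp
  moreover have "g dvd r * (x * y)" using dv by simp
  ultimately have "g dvd r * (x * y) - (r * x - 1) * y" by (simp add: dvd_diff)
  then have "g dvd y" by (simp add: algebra_simps)
  then show ?thesis ..
qed

lemma classify: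
  fixes g1 g2 :: "'a::field poly"
  assumes P1: "\<And>x y. g1 dvd x * y \<Longrightarrow> g1 dvd x \<or> g1 dvd y"
    and P2: "\<And>x y. g2 dvd x * y \<Longrightarrow> g2 dvd x \<or> g2 dvd y"
    and nz: "g1 \<noteq> 0" "g2 \<noteq> 0"
  shows "d * e = g1 ^ a * g2 ^ b \<Longrightarrow> \<exists>c i j. c \<noteq> 0 \<and> i \<le> a \<and> j \<le> b \<and> d = smult c (g1 ^ i * g2 ^ j)"
proof (induction "a + b" arbitrary: a b d e rule: less_induct)
  case less
  show ?case
  proof (cases "a > 0")
    case True
    then obtain a' where a: "a = Suc a'" by (cases a) auto
    have "g1 dvd d * e" using less.prems a by simp
    then consider "g1 dvd d" | "g1 dvd e" using P1 by blast
    then show ?thesis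
    proof cases
      case 1
      then obtain d' where d': "d = g1 * d'" by (auto elim: dvdE)
      have "g1 * (d' * e) = g1 * (g1 ^ a' * g2 ^ b)" using less.prems a d' by (simp add: mult.assoc)
      then have "d' * e = g1 ^ a' * g2 ^ b" using nz by simp
      then have "\<exists>c i j. c \<noteq> 0 \<and> i \<le> a' \<and> j \<le> b \<and> d' = smult c (g1 ^ i * g2 ^ j)"
        using less.hyps[of a' b d' e] a by simp
      then obtain c i j where "c \<noteq> 0" "i \<le> a'" "j \<le> b" "d' = smult c (g1 ^ i * g2 ^ j)"
        by blast
      then show ?thesis using d' a
        by (intro exI[of _ c] exI[of _ "Suc i"] exI[of _ j]) (simp add: mult_ac)
    next
      case 2
      then obtain e' where e': "e = g1 * e'" by (auto elim: dvdE)
      have "g1 * (d * e') = g1 * (g1 ^ a' * g2 ^ b)" using less.prems a e' by (simp add: mult_ac)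
      then have "d * e' = g1 ^ a' * g2 ^ b" using nz by simp
      then have "\<exists>c i j. c \<noteq> 0 \<and> i \<le> a' \<and> j \<le> b \<and> d = smult c (g1 ^ i * g2 ^ j)"
        using less.hyps[of a' b d e'] a by simp
      then obtain c i j where "c \<noteq> 0" "i \<le> a'" "j \<le> b" "d = smult c (g1 ^ i * g2 ^ j)"
        by blast
      then show ?thesis using a by (intro exI[of _ c] exI[of _ i] exI[of _ j]) auto
    qed
  next
    case False
    then have a0: "a = 0" by simp
    show ?thesis
    proof (cases "b > 0")
      case True
      then obtain b' where b: "b = Suc b'" by (cases b) auto
      have "g2 dvd d * e" using less.prems b by simp
      then consider "g2 dvd d" | "g2 dvd e" using P2 by blast
      then show ?thesis
      proof cases
        case 1
        then obtain d' where d': "d = g2 * d'" by (auto elim: dvdE)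
        have "g2 * (d' * e) = g2 * (g1 ^ a * g2 ^ b')" using less.prems b d' by (simp add: mult_ac)
        then have "d' * e = g1 ^ a * g2 ^ b'" using nz by simp
        then have "\<exists>c i j. c \<noteq> 0 \<and> i \<le> a \<and> j \<le> b' \<and> d' = smult c (g1 ^ i * g2 ^ j)"
          using less.hyps[of a b' d' e] b by simp
        then obtain c i j where "c \<noteq> 0" "i \<le> a" "j \<le> b'" "d' = smult c (g1 ^ i * g2 ^ j)"
          by blast
        then show ?thesis using d' b
          by (intro exI[of _ c] exI[of _ i] exI[of _ "Suc j"]) (simp add: mult_ac)
      next
        case 2
        then obtain e' where e': "e = g2 * e'" by (auto elim: dvdE)
        have "g2 * (d * e') = g2 * (g1 ^ a * g2 ^ b')" using less.prems b e' by (simp add: mult_ac)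
        then have "d * e' = g1 ^ a * g2 ^ b'" using nz by simp
        then have "\<exists>c i j. c \<noteq> 0 \<and> i \<le> a \<and> j \<le> b' \<and> d = smult c (g1 ^ i * g2 ^ j)"
          using less.hyps[of a b' d e'] b by simp
        then obtain c i j where "c \<noteq> 0" "i \<le> a" "j \<le> b'" "d = smult c (g1 ^ i * g2 ^ j)"
          by blast
        then show ?thesis using b by (intro exI[of _ c] exI[of _ i] exI[of _ j]) auto
      qed
    next
      case False
      then have "d * e = 1" using a0 less.prems by simp
      then have dz: "d \<noteq> 0" "e \<noteq> 0" by auto
      have "degree (d * e) = degree d + degree e" using dz by (rule degree_mult_eq)
      then have "degree d = 0" "d \<noteq> 0" using \<open>d * e = 1\<close> dz by auto
      then obtain c where "d = [:c:]" "c \<noteq> 0" by (auto elim: degree_eq_zeroE)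
      then show ?thesis using a0 False by (intro exI[of _ c] exI[of _ 0] exI[of _ 0]) auto
    qed
  qed
qed



lemma card_zero_field: "of_nat (card (UNIV :: 'a::{field,finite} set)) = (0::'a)"
proof -
  have "(\<Sum>x\<in>(UNIV::'a set). x + 1) = (\<Sum>x\<in>UNIV. x)"
    by (rule sum.reindex_bij_witness[of _ "\<lambda>x. x - 1" "\<lambda>x. x + 1"]) auto
  then show ?thesis by (simp add: sum.distrib)
qed

lemma fermat_field: "(x::'a::{field,finite}) ^ card (UNIV :: 'a set) = x"
proof (cases "x = 0")
  case False
  have "x * (\<Prod>y\<in>UNIV-{0}. x * y) = x * x ^ (card (UNIV :: 'a set) - 1) * \<Prod>(UNIV-{0})"
    by (simp add: prod.distrib mult_ac)
  also have "x * x ^ (card (UNIV :: 'a set) - 1) = x ^ Suc (card (UNIV :: 'a set) - 1)"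
    by (subst power_Suc) auto
  also have "Suc (card (UNIV :: 'a set) - 1) = card (UNIV :: 'a set)"
    using finite_UNIV_card_ge_0[where ?'a = 'a] by simp
  also have "(\<Prod>y\<in>UNIV-{0}. x * y) = (\<Prod>y\<in>UNIV-{0}. y)"
    by (rule prod.reindex_bij_witness[of _ "\<lambda>y. y / x" "\<lambda>y. x * y"]) (use False in auto)
  finally show ?thesis
    by simp
qed (use finite_UNIV_card_ge_0[where ?'a = 'a] in auto)

lemma field_facts:
  fixes p m :: nat and \<gamma> :: "'a::{field, finite}"
  assumes "prime p" and "odd p" 
    and "card (UNIV :: 'a set) = p ^ m" and "(p ^ m) mod 4 = 3"
  shows "CHAR('a) = p" "(2::'a) \<noteq> 0" "\<And>t::'a. t^2 \<noteq> -1"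
proof -
  have cp: "CHAR('a) > 0" by (rule finite_imp_CHAR_pos) simp
  have pc: "prime CHAR('a)" using cp prime_CHAR_semidom by blast
  have "CHAR('a) dvd p ^ m" using card_zero_field[where 'a='a] assms(3)
    by (metis of_nat_eq_0_iff_char_dvd)
  then have "CHAR('a) dvd p" using pc prime_dvd_power by blast
  then show ch: "CHAR('a) = p" using pc assms(1) by (metis prime_nat_iff prime_gt_1_nat less_irrefl)
  have p3: "p \<ge> 3" using assms(1,2) prime_ge_2_nat[of p] by (cases "p = 2") auto
  have "\<not> p dvd 2" using p3 by (auto dest: dvd_imp_le)
  then have "of_nat 2 \<noteq> (0::'a)"
  proof (intro notI)
    assume "of_nat 2 = (0::'a)"
    then have "CHAR('a) dvd 2" by (rule of_nat_eq_0_iff_char_dvd[THEN iffD1])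
    then show False using ch \<open>\<not> p dvd 2\<close> by simp
  qed
  then show two: "(2::'a) \<noteq> 0" by simp
  fix t :: 'a
  show "t^2 \<noteq> -1"
  proof
    assume t: "t^2 = -1"
    obtain k where k: "p ^ m = 4 * k + 3" using assms(4) by (metis mod_mult_div_eq add.commute)
    have "t = t ^ (p ^ m)" using fermat_field[of t] assms(3) by simp
    also have "\<dots> = (t^2)^(2*k+1) * t"
    proof -
      have e: "p^m = 2*(2*k+1)+1" using k by simp
      show ?thesis unfolding e by (simp only: power_add power_mult power_one_right)
    qed
    also have "\<dots> = - t" using t by simp
    finally have "2 * t = 0" by (simp add: algebra_simps) 
    then have "t = 0" using two by simp
    then show False using t by simp
  qed
qed



lemma J_smult: "c \<noteq> 0 \<Longrightarrow> Jd f (smult c e) = Jd f e"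
  by (simp add: Jd_def smult_dvd_iff)

lemma Jd_mono: "d dvd e \<Longrightarrow> Jd f e \<subseteq> Jd f d"
  by (auto simp: Jd_def intro: dvd_trans)

lemma Jd_self: "degree e < degree f \<Longrightarrow> e \<in> Jd f e"
  by (simp add: Jd_def)

lemma Jd_one: "Jd f 1 = {g. degree g < degree f}"
  by (simp add: Jd_def)

lemma prime_pow_dvd:
  assumes P: "\<And>x y. g dvd x * y \<Longrightarrow> g dvd x \<or> g dvd y" and n1: "\<not> g dvd 1"
  shows "g dvd a ^ k \<Longrightarrow> g dvd a"
proof (induction k)
  case 0 then show ?case using n1 by simp
next
  case (Suc k) then show ?case using P[of a "a^k"] by auto
qed

context
  fixes f g1 g2 :: "'a::field poly" and n :: nat
  assumes fdef: "f = g1^n * g2^n" and npos: "n > 0"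
    and dg1: "degree g1 = 2" and dg2: "degree g2 = 2"
    and P1: "\<And>x y. g1 dvd x*y \<Longrightarrow> g1 dvd x \<or> g1 dvd y"
    and P2: "\<And>x y. g2 dvd x*y \<Longrightarrow> g2 dvd x \<or> g2 dvd y"
    and nd12: "\<not> g1 dvd g2" and nd21: "\<not> g2 dvd g1"
begin

lemma g1nz: "g1 \<noteq> 0" using dg1 by auto
lemma g2nz: "g2 \<noteq> 0" using dg2 by auto

lemma C_degf: "degree f = 4 * n"
  by (simp add: fdef degree_mult_eq degree_power_eq g1nz g2nz dg1 dg2)

lemma dpos: "degree f > 0" using C_degf npos by simp

lemma C_dvd: "i \<le> n \<Longrightarrow> j \<le> n \<Longrightarrow> g1^i*g2^j dvd f"
  unfolding fdef by (intro mult_dvd_mono le_imp_power_dvd)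

lemma deg_prod: "degree (g1^i*g2^j) = 2*i + 2*j"
  by (simp add: degree_mult_eq degree_power_eq g1nz g2nz dg1 dg2)

lemma C_class: "d dvd f \<Longrightarrow> \<exists>c i j. c \<noteq> 0 \<and> i \<le> n \<and> j \<le> n \<and> d = smult c (g1^i*g2^j)"
proof -
  assume "d dvd f"
  then obtain e where "f = d * e" by (auto elim: dvdE)
  then have "d * e = g1^n * g2^n" using fdef by simp
  then show ?thesis using classify[OF P1 P2 g1nz g2nz, of d e n n] by simp
qed

lemma C_ideals: "ideal I (quot_poly_ring f) \<longleftrightarrow> (\<exists>i j. i \<le> n \<and> j \<le> n \<and> I = Jd f (g1^i*g2^j))"
proof
  assume "ideal I (quot_poly_ring f)"
  then obtain d where d: "d dvd f" "I = Jd f d" using ideal_J[OF dpos] by blast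
  then obtain c i j where "c \<noteq> 0" "i \<le> n" "j \<le> n" "d = smult c (g1^i*g2^j)" using C_class by blast
  then show "\<exists>i j. i \<le> n \<and> j \<le> n \<and> I = Jd f (g1^i*g2^j)" using d J_smult by metis
next
  assume "\<exists>i j. i \<le> n \<and> j \<le> n \<and> I = Jd f (g1^i*g2^j)"
  then show "ideal I (quot_poly_ring f)" using J_ideal[OF dpos C_dvd] by blast
qed

lemma C_Idl_pow: "i \<le> n \<Longrightarrow> j \<le> n \<Longrightarrow>
  Idl\<^bsub>quot_poly_ring f\<^esub> {g1 [^]\<^bsub>quot_poly_ring f\<^esub> i \<otimes>\<^bsub>quot_poly_ring f\<^esub> g2 [^]\<^bsub>quot_poly_ring f\<^esub> j}
   = Jd f (g1^i*g2^j)"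
proof -
  assume ij: "i \<le> n" "j \<le> n"
  have "g1 [^]\<^bsub>quot_poly_ring f\<^esub> i \<otimes>\<^bsub>quot_poly_ring f\<^esub> g2 [^]\<^bsub>quot_poly_ring f\<^esub> j
      = ((g1^i mod f) * (g2^j mod f)) mod f" by (simp add: S_pow[OF dpos] S_simps[OF dpos])
  also have "\<dots> = (g1^i*g2^j) mod f" by (rule mod_mult_eq)
  finally show ?thesis using Idl_eq'[OF dpos C_dvd[OF ij]] by simp
qed

lemma g1_mod: "g1 mod f = g1" using C_degf npos dg1 by (intro mod_poly_less) simp
lemma g2_mod: "g2 mod f = g2" using C_degf npos dg2 by (intro mod_poly_less) simp
lemma g1_dvd: "g1 dvd f" using C_dvd[of 1 0] npos by simp
lemma g2_dvd: "g2 dvd f" using C_dvd[of 0 1] npos by simp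

lemma C_Idl_g1: "Idl\<^bsub>quot_poly_ring f\<^esub> {g1} = Jd f g1"
  using Idl_eq'[OF dpos g1_dvd] g1_mod by simp
lemma C_Idl_g2: "Idl\<^bsub>quot_poly_ring f\<^esub> {g2} = Jd f g2"
  using Idl_eq'[OF dpos g2_dvd] g2_mod by simp

lemma C_card: "finite (UNIV :: 'a set) \<Longrightarrow> i \<le> n \<Longrightarrow> j \<le> n \<Longrightarrow>
   card (Jd f (g1^i*g2^j)) = card (UNIV :: 'a set) ^ (4 * n - 2 * i - 2 * j)"
  using card_J[OF dpos _ C_dvd] by (simp add: C_degf deg_prod)

lemma one_notin1: "1 \<notin> Jd f g1"
proof
  assume "1 \<in> Jd f g1"
  then have "g1 dvd 1" by (simp add: Jd_def)
  then have "degree g1 \<le> degree (1::'a poly)" by (rule dvd_imp_degree_le) simp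
  then show False using dg1 by simp
qed

lemma one_notin2: "1 \<notin> Jd f g2"
proof
  assume "1 \<in> Jd f g2"
  then have "g2 dvd 1" by (simp add: Jd_def)
  then have "degree g2 \<le> degree (1::'a poly)" by (rule dvd_imp_degree_le) simp
  then show False using dg2 by simp
qed

lemma carrier_J1: "carrier (quot_poly_ring f) = Jd f 1"
  by (simp add: S_simps[OF dpos] Jd_one)

lemma one_in_carrier: "1 \<in> carrier (quot_poly_ring f)"
  using dpos by (simp add: S_simps[OF dpos])

lemma C_ne: "Jd f g1 \<noteq> Jd f g2"
proof -
  have "g1 \<in> Jd f g1" using g1_mod mod_deg[OF dpos, of g1] by (simp add: Jd_def)
  moreover have "g1 \<notin> Jd f g2" using nd21 by (simp add: Jd_def)
  ultimately show ?thesis by blast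
qed

lemma max1: "maximalideal (Jd f g1) (quot_poly_ring f)"
proof (rule maximalidealI)
  show "ideal (Jd f g1) (quot_poly_ring f)" by (rule J_ideal[OF dpos g1_dvd])
  show "carrier (quot_poly_ring f) \<noteq> Jd f g1"
    using one_notin1 one_in_carrier by blast
  fix J assume J: "ideal J (quot_poly_ring f)" "Jd f g1 \<subseteq> J" "J \<subseteq> carrier (quot_poly_ring f)"
  then obtain i j where ij: "i \<le> n" "j \<le> n" "J = Jd f (g1^i*g2^j)" using C_ideals by blast
  have "g1 \<in> Jd f g1" using g1_mod mod_deg[OF dpos, of g1] by (simp add: Jd_def)
  then have "g1 \<in> J" using J(2) by blast
  then have dv: "g1^i*g2^j dvd g1" using ij by (simp add: Jd_def)
  have j0: "j = 0"
  proof (rule ccontr)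
    assume "j \<noteq> 0"
    then have "g2 dvd g1^i*g2^j" by (simp add: dvd_power)
    then show False using dv nd21 dvd_trans by blast
  qed
  have i1: "i \<le> 1"
  proof (rule ccontr)
    assume "\<not> i \<le> 1"
    have "degree (g1^i*g2^j) \<le> degree g1" using dv g1nz by (rule dvd_imp_degree_le)
    then show False using deg_prod[of i j] dg1 \<open>\<not> i \<le> 1\<close> by simp
  qed
  show "J = Jd f g1 \<or> J = carrier (quot_poly_ring f)"
  proof (cases "i = 0")
    case True then show ?thesis using ij j0 carrier_J1 by simp
  next
    case False then have "i = 1" using i1 by simp
    then show ?thesis using ij j0 by simp
  qed
qed

lemma max2: "maximalideal (Jd f g2) (quot_poly_ring f)"
proof (rule maximalidealI)
  show "ideal (Jd f g2) (quot_poly_ring f)" by (rule J_ideal[OF dpos g2_dvd])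
  show "carrier (quot_poly_ring f) \<noteq> Jd f g2"
    using one_notin2 one_in_carrier by blast
  fix J assume J: "ideal J (quot_poly_ring f)" "Jd f g2 \<subseteq> J" "J \<subseteq> carrier (quot_poly_ring f)"
  then obtain i j where ij: "i \<le> n" "j \<le> n" "J = Jd f (g1^i*g2^j)" using C_ideals by blast
  have "g2 \<in> Jd f g2" using g2_mod mod_deg[OF dpos, of g2] by (simp add: Jd_def)
  then have "g2 \<in> J" using J(2) by blast
  then have dv: "g1^i*g2^j dvd g2" using ij by (simp add: Jd_def)
  have i0: "i = 0"
  proof (rule ccontr)
    assume "i \<noteq> 0"
    then have "g1 dvd g1^i*g2^j" by (simp add: dvd_power)
    then show False using dv nd12 dvd_trans by blast
  qed
  have j1: "j \<le> 1"
  proof (rule ccontr)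
    assume "\<not> j \<le> 1"
    have "degree (g1^i*g2^j) \<le> degree g2" using dv g2nz by (rule dvd_imp_degree_le)
    then show False using deg_prod[of i j] dg2 \<open>\<not> j \<le> 1\<close> by simp
  qed
  show "J = Jd f g2 \<or> J = carrier (quot_poly_ring f)"
  proof (cases "j = 0")
    case True then show ?thesis using ij i0 carrier_J1 by simp
  next
    case False then have "j = 1" using j1 by simp
    then show ?thesis using ij i0 by simp
  qed
qed

lemma C_max: "{I. maximalideal I (quot_poly_ring f)} = {Jd f g1, Jd f g2}"
proof
  show "{Jd f g1, Jd f g2} \<subseteq> {I. maximalideal I (quot_poly_ring f)}" using max1 max2 by simp
  show "{I. maximalideal I (quot_poly_ring f)} \<subseteq> {Jd f g1, Jd f g2}"
  proof
    fix I assume "I \<in> {I. maximalideal I (quot_poly_ring f)}"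
    then interpret maximalideal I "quot_poly_ring f" by simp
    obtain i j where ij: "i \<le> n" "j \<le> n" "I = Jd f (g1^i*g2^j)" using C_ideals is_ideal by blast
    show "I \<in> {Jd f g1, Jd f g2}"
    proof (cases "i > 0")
      case True
      then have "g1 dvd g1^i*g2^j" by (simp add: dvd_power)
      then have "I \<subseteq> Jd f g1" using ij Jd_mono by simp
      moreover have "Jd f g1 \<subseteq> carrier (quot_poly_ring f)" unfolding Jd_def S_simps[OF dpos] by blast
      ultimately have "Jd f g1 = I \<or> Jd f g1 = carrier (quot_poly_ring f)"
        using I_maximal[OF J_ideal[OF dpos g1_dvd]] by blast
      moreover have "Jd f g1 \<noteq> carrier (quot_poly_ring f)" using one_notin1 one_in_carrier by blast
      ultimately show ?thesis by auto
    next
      case False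
      show ?thesis
      proof (cases "j > 0")
        case True
        then have "g2 dvd g1^i*g2^j" by (simp add: dvd_power)
        then have "I \<subseteq> Jd f g2" using ij Jd_mono by simp
        moreover have "Jd f g2 \<subseteq> carrier (quot_poly_ring f)" unfolding Jd_def S_simps[OF dpos] by blast
        ultimately have "Jd f g2 = I \<or> Jd f g2 = carrier (quot_poly_ring f)"
          using I_maximal[OF J_ideal[OF dpos g2_dvd]] by blast
        moreover have "Jd f g2 \<noteq> carrier (quot_poly_ring f)" using one_notin2 one_in_carrier by blast
        ultimately show ?thesis by auto
      next
        case False
        then have "I = carrier (quot_poly_ring f)" using ij \<open>\<not> i > 0\<close> carrier_J1 by simp
        then show ?thesis using I_notcarr by simp
      qed
    qed
  qed
qed

lemma ndvd1_1: "\<not> g1 dvd 1" using one_notin1 dpos by (simp add: Jd_def)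
lemma ndvd1_2: "\<not> g2 dvd 1" using one_notin2 dpos by (simp add: Jd_def)

lemma C_nil: "nilpotents (quot_poly_ring f) = Jd f (g1 * g2)"
proof
  show "nilpotents (quot_poly_ring f) \<subseteq> Jd f (g1 * g2)"
  proof
    fix a assume "a \<in> nilpotents (quot_poly_ring f)"
    then obtain k where a: "degree a < degree f" "f dvd a ^ k"
      by (auto simp: nilpotents_def S_simps[OF dpos] S_pow[OF dpos])
    then have "f dvd a ^ k" by simp
    then have "g1 dvd a ^ k" "g2 dvd a ^ k" using g1_dvd g2_dvd dvd_trans by blast+
    then have "g1 dvd a" "g2 dvd a" using prime_pow_dvd[OF P1 ndvd1_1] prime_pow_dvd[OF P2 ndvd1_2] by blast+
    then obtain a' where a': "a = g1 * a'" by (auto elim: dvdE)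
    then have "g2 dvd a'" using P2[of g1 a'] nd21 \<open>g2 dvd a\<close> by auto
    then have "g1 * g2 dvd a" using a' by simp
    then show "a \<in> Jd f (g1 * g2)" using a by (simp add: Jd_def)
  qed
  show "Jd f (g1 * g2) \<subseteq> nilpotents (quot_poly_ring f)"
  proof
    fix a assume a: "a \<in> Jd f (g1 * g2)"
    then obtain b where b: "a = g1 * g2 * b" by (auto simp: Jd_def elim: dvdE)
    have "a ^ n = f * b ^ n" using b fdef by (simp add: power_mult_distrib)
    then have "a ^ n mod f = 0" by simp
    then show "a \<in> nilpotents (quot_poly_ring f)" unfolding nilpotents_def using a
      by (auto simp: S_simps[OF dpos] S_pow[OF dpos] Jd_def intro!: exI[of _ n])
  qed
qed

lemma C_units: "carrier (quot_poly_ring f) - Units (quot_poly_ring f) = Jd f g1 \<union> Jd f g2"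
proof
  show "carrier (quot_poly_ring f) - Units (quot_poly_ring f) \<subseteq> Jd f g1 \<union> Jd f g2"
  proof
    fix a assume a: "a \<in> carrier (quot_poly_ring f) - Units (quot_poly_ring f)"
    then have ad: "degree a < degree f" by (simp add: S_simps[OF dpos])
    show "a \<in> Jd f g1 \<union> Jd f g2"
    proof (rule ccontr)
      assume "a \<notin> Jd f g1 \<union> Jd f g2"
      then have n1: "\<not> g1 dvd a" and n2: "\<not> g2 dvd a" using ad by (auto simp: Jd_def)
      obtain d where d: "d dvd f" "PI f a = Jd f d" using ideal_J[OF dpos PI_ideal[OF dpos]] by blast
      have "a \<in> PI f a" unfolding PI_def using ad by (simp, intro exI[of _ 1], simp add: mod_poly_less)
      then have "d dvd a" using d by (simp add: Jd_def)
      obtain c i j where cij: "c \<noteq> 0" "i \<le> n" "j \<le> n" "d = smult c (g1^i*g2^j)" using C_class d by blast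
      have "i = 0"
      proof (rule ccontr)
        assume "i \<noteq> 0"
        then have "g1 dvd d" using cij by (simp add: dvd_power dvd_smult)
        then show False using n1 \<open>d dvd a\<close> dvd_trans by blast
      qed
      moreover have "j = 0"
      proof (rule ccontr)
        assume "j \<noteq> 0"
        then have "g2 dvd d" using cij by (simp add: dvd_power dvd_smult)
        then show False using n2 \<open>d dvd a\<close> dvd_trans by blast
      qed
      ultimately have "d = [:c:]" using cij by simp
      then have "1 \<in> Jd f d" using cij dpos by (auto simp: Jd_def intro!: dvdI[of _ _ "[:1/c:]"])
      then have "1 \<in> PI f a" using d by simp
      then obtain r where r: "1 = (r * a) mod f" unfolding PI_def by blast
      have "r mod f \<in> carrier (quot_poly_ring f)" by (simp add: S_simps[OF dpos] mod_deg[OF dpos])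
      moreover have "(r mod f) * a mod f = 1" using r by (simp add: mod_mult_left_eq)
      moreover have "a * (r mod f) mod f = 1" using r by (simp add: mod_mult_right_eq mult.commute)
      ultimately have "a \<in> Units (quot_poly_ring f)" using a
        by (auto simp: Units_def S_simps[OF dpos])
      then show False using a by simp
    qed
  qed
  show "Jd f g1 \<union> Jd f g2 \<subseteq> carrier (quot_poly_ring f) - Units (quot_poly_ring f)"
  proof
    fix a assume a: "a \<in> Jd f g1 \<union> Jd f g2"
    then have ac: "a \<in> carrier (quot_poly_ring f)" by (auto simp: Jd_def S_simps[OF dpos])
    have "a \<notin> Units (quot_poly_ring f)"
    proof
      assume "a \<in> Units (quot_poly_ring f)"
      then obtain b where b: "(b * a) mod f = 1" by (auto simp: Units_def S_simps[OF dpos])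
      from a show False
      proof
        assume "a \<in> Jd f g1"
        then have "g1 dvd (b * a) mod f" using g1_dvd by (auto simp: Jd_def intro!: dvd_mod)
        then show False using b ndvd1_1 by simp
      next
        assume "a \<in> Jd f g2"
        then have "g2 dvd (b * a) mod f" using g2_dvd by (auto simp: Jd_def intro!: dvd_mod)
        then show False using b ndvd1_2 by simp
      qed
    qed
    then show "a \<in> carrier (quot_poly_ring f) - Units (quot_poly_ring f)" using ac by simp
  qed
qed

lemma C_all:
  assumes fin: "finite (UNIV :: 'a set)"
  shows "{I. maximalideal I (quot_poly_ring f)} = {Idl\<^bsub>quot_poly_ring f\<^esub> {g1}, Idl\<^bsub>quot_poly_ring f\<^esub> {g2}}
         \<and> Idl\<^bsub>quot_poly_ring f\<^esub> {g1} \<noteq> Idl\<^bsub>quot_poly_ring f\<^esub> {g2}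
         \<and> {I. ideal I (quot_poly_ring f)} = {Idl\<^bsub>quot_poly_ring f\<^esub> {g1 [^]\<^bsub>quot_poly_ring f\<^esub> i \<otimes>\<^bsub>quot_poly_ring f\<^esub> g2 [^]\<^bsub>quot_poly_ring f\<^esub> j} | i j.
                                  i \<le> n \<and> j \<le> n}
         \<and> (\<forall>i j. i \<le> n \<longrightarrow> j \<le> n \<longrightarrow>
              card (Idl\<^bsub>quot_poly_ring f\<^esub> {g1 [^]\<^bsub>quot_poly_ring f\<^esub> i \<otimes>\<^bsub>quot_poly_ring f\<^esub> g2 [^]\<^bsub>quot_poly_ring f\<^esub> j})
                = card (UNIV :: 'a set) ^ (4 * n - 2 * i - 2 * j))
         \<and> nilpotents (quot_poly_ring f) = Idl\<^bsub>quot_poly_ring f\<^esub> {(g1 * g2) mod f}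
         \<and> carrier (quot_poly_ring f) - Units (quot_poly_ring f) = Idl\<^bsub>quot_poly_ring f\<^esub> {g1} \<union> Idl\<^bsub>quot_poly_ring f\<^esub> {g2}"
proof (intro conjI allI impI)
  show "{I. maximalideal I (quot_poly_ring f)} = {Idl\<^bsub>quot_poly_ring f\<^esub> {g1}, Idl\<^bsub>quot_poly_ring f\<^esub> {g2}}"
    using C_max C_Idl_g1 C_Idl_g2 by simp
  show "Idl\<^bsub>quot_poly_ring f\<^esub> {g1} \<noteq> Idl\<^bsub>quot_poly_ring f\<^esub> {g2}"
    using C_ne C_Idl_g1 C_Idl_g2 by simp
  show "{I. ideal I (quot_poly_ring f)} = {Idl\<^bsub>quot_poly_ring f\<^esub> {g1 [^]\<^bsub>quot_poly_ring f\<^esub> i \<otimes>\<^bsub>quot_poly_ring f\<^esub> g2 [^]\<^bsub>quot_poly_ring f\<^esub> j} | i j.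
                                  i \<le> n \<and> j \<le> n}"
  proof -
    have "{I. ideal I (quot_poly_ring f)} = {Jd f (g1^i*g2^j) | i j. i \<le> n \<and> j \<le> n}"
      using C_ideals by blast
    also have "\<dots> = {Idl\<^bsub>quot_poly_ring f\<^esub> {g1 [^]\<^bsub>quot_poly_ring f\<^esub> i \<otimes>\<^bsub>quot_poly_ring f\<^esub> g2 [^]\<^bsub>quot_poly_ring f\<^esub> j} | i j.
                                  i \<le> n \<and> j \<le> n}"
      using C_Idl_pow by (metis (no_types, opaque_lifting))
    finally show ?thesis .
  qed
  fix i j :: nat assume "i \<le> n" "j \<le> n"
  then show "card (Idl\<^bsub>quot_poly_ring f\<^esub> {g1 [^]\<^bsub>quot_poly_ring f\<^esub> i \<otimes>\<^bsub>quot_poly_ring f\<^esub> g2 [^]\<^bsub>quot_poly_ring f\<^esub> j})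
                = card (UNIV :: 'a set) ^ (4 * n - 2 * i - 2 * j)"
    using C_Idl_pow C_card[OF fin] by simp
next
  show "nilpotents (quot_poly_ring f) = Idl\<^bsub>quot_poly_ring f\<^esub> {(g1 * g2) mod f}"
    using C_nil Idl_eq'[OF dpos C_dvd[of 1 1]] npos by simp
  show "carrier (quot_poly_ring f) - Units (quot_poly_ring f) = Idl\<^bsub>quot_poly_ring f\<^esub> {g1} \<union> Idl\<^bsub>quot_poly_ring f\<^esub> {g2}"
    using C_units C_Idl_g1 C_Idl_g2 by simp
qed

end


lemma g12_ident:
  fixes \<gamma> \<alpha>0 :: "'a::field"
  assumes two: "(2::'a) \<noteq> 0" and h: "\<gamma> ^ 4 + 4 * \<alpha>0 = 0"
  shows "[:\<gamma>\<^sup>2 / 2, \<gamma>, 1:] * [:\<gamma>\<^sup>2 / 2, - \<gamma>, 1:] = [:- \<alpha>0, 0, 0, 0, 1:]"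
proof -
  have four: "(4::'a) \<noteq> 0" using two by (metis mult_2_right mult_eq_0_iff numeral_Bit0 one_add_one)
  have "4 * \<alpha>0 = (\<gamma> ^ 4 + 4 * \<alpha>0) - \<gamma> ^ 4" by simp
  also have "\<dots> = - (\<gamma> ^ 4)" using h by simp
  finally have "4 * \<alpha>0 = - (\<gamma> ^ 4)" .
  then have a: "\<alpha>0 = - (\<gamma>^4 / 4)" using four by (simp add: field_simps)
  show ?thesis using two by (simp add: a field_simps power2_eq_square power4_eq_xxxx)
qed

lemma X_ident: "[:- (c::'a::field), 0, 0, 0, 1:] = monom 1 4 - [:c:]"
  by (simp add: monom_Suc numeral_eq_Suc monom_0)

lemma noroot:
  fixes \<gamma> :: "'a::field"
  assumes two: "(2::'a) \<noteq> 0" and gnz: "\<gamma> \<noteq> 0" and nosq: "\<And>t::'a. t^2 \<noteq> -1"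
  shows "poly [:\<gamma>\<^sup>2 / 2, \<gamma>, 1:] r \<noteq> 0" "poly [:\<gamma>\<^sup>2 / 2, - \<gamma>, 1:] r \<noteq> 0"
proof -
  show "poly [:\<gamma>\<^sup>2 / 2, \<gamma>, 1:] r \<noteq> 0"
  proof
    assume "poly [:\<gamma>\<^sup>2 / 2, \<gamma>, 1:] r = 0"
    then have h: "\<gamma>\<^sup>2 / 2 + \<gamma> * r + r^2 = 0" by (simp add: algebra_simps power2_eq_square)
    have "(2 * r + \<gamma>)^2 = 4 * (\<gamma>\<^sup>2 / 2 + \<gamma> * r + r^2) - \<gamma>^2" using two by (simp add: field_simps power2_eq_square)
    also have "\<dots> = - (\<gamma>^2)" using h by simp
    finally have "((2 * r + \<gamma>)/\<gamma>)^2 = -1" using gnz by (simp add: power_divide)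
    then show False using nosq by blast
  qed
  show "poly [:\<gamma>\<^sup>2 / 2, - \<gamma>, 1:] r \<noteq> 0"
  proof
    assume "poly [:\<gamma>\<^sup>2 / 2, - \<gamma>, 1:] r = 0"
    then have h: "\<gamma>\<^sup>2 / 2 - \<gamma> * r + r^2 = 0" by (simp add: algebra_simps power2_eq_square)
    have "(2 * r - \<gamma>)^2 = 4 * (\<gamma>\<^sup>2 / 2 - \<gamma> * r + r^2) - \<gamma>^2" using two by (simp add: field_simps power2_eq_square)
    also have "\<dots> = - (\<gamma>^2)" using h by simp
    finally have "((2 * r - \<gamma>)/\<gamma>)^2 = -1" using gnz by (simp add: power_divide)
    then show False using nosq by blast
  qed
qed

theorem proposition3p4:
  fixes p m s :: nat and \<alpha> \<alpha>0 \<gamma> :: "'a::{field, finite}"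
  assumes "prime p" and "odd p" and "m > 0" and "s > 0"
    and "card (UNIV :: 'a set) = p ^ m" and "(p ^ m) mod 4 = 3"
    and "\<alpha> \<noteq> 0" and "\<not> (\<exists>b. b ^ 2 = \<alpha>)"
    and "\<alpha>0 ^ (p ^ s) = \<alpha>"
    and "\<gamma> ^ 4 + 4 * \<alpha>0 = 0"
  defines "S \<equiv> quot_poly_ring (monom 1 (4 * p ^ s) - [:\<alpha>:])"
    and "g1 \<equiv> [:\<gamma>\<^sup>2 / 2, \<gamma>, 1:]"
    and "g2 \<equiv> [:\<gamma>\<^sup>2 / 2, - \<gamma>, 1:]"
  shows "{I. maximalideal I S} = {Idl\<^bsub>S\<^esub> {g1}, Idl\<^bsub>S\<^esub> {g2}}
         \<and> Idl\<^bsub>S\<^esub> {g1} \<noteq> Idl\<^bsub>S\<^esub> {g2}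
         \<and> {I. ideal I S} = {Idl\<^bsub>S\<^esub> {g1 [^]\<^bsub>S\<^esub> i \<otimes>\<^bsub>S\<^esub> g2 [^]\<^bsub>S\<^esub> j} | i j.
                                  i \<le> p ^ s \<and> j \<le> p ^ s}
         \<and> (\<forall>i j. i \<le> p ^ s \<longrightarrow> j \<le> p ^ s \<longrightarrow>
              card (Idl\<^bsub>S\<^esub> {g1 [^]\<^bsub>S\<^esub> i \<otimes>\<^bsub>S\<^esub> g2 [^]\<^bsub>S\<^esub> j})
                = p ^ (m * (4 * p ^ s - 2 * i - 2 * j)))
         \<and> nilpotents S = Idl\<^bsub>S\<^esub> {[:- \<alpha>0, 0, 0, 0, 1:]}
         \<and> carrier S - Units S = Idl\<^bsub>S\<^esub> {g1} \<union> Idl\<^bsub>S\<^esub> {g2}"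
proof -
  have fin: "finite (UNIV :: 'a set)" by simp
  note ff = field_facts[OF assms(1,2,5,6)]
  have two: "(2::'a) \<noteq> 0" by (rule ff(2))
  have four: "(4::'a) \<noteq> 0" using two by (metis mult_2_right mult_eq_0_iff numeral_Bit0 one_add_one)
  have ps: "p ^ s > 0" using assms(1) by (simp add: prime_gt_0_nat)
  have p3: "p \<ge> 3" using assms(1,2) prime_ge_2_nat[of p] by (cases "p = 2") auto
  have "p ^ 1 \<le> p ^ s" using assms(4) p3 by (intro power_increasing) auto
  then have ps3: "p ^ s \<ge> 3" using p3 by simp
  have gnz: "\<gamma> \<noteq> 0"
  proof
    assume "\<gamma> = 0"
    then have "4 * \<alpha>0 = 0" using assms(10) by simp
    then have "\<alpha>0 = 0" using four by simp
    have "\<alpha> = \<alpha>0 ^ (p ^ s)" using assms(9) by simp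
    then have "\<alpha> = 0" using \<open>\<alpha>0 = 0\<close> prime_gt_0_nat[OF assms(1)] by simp
    then show False using assms(7) by simp
  qed
  define f where "f = monom 1 (4 * p ^ s) - [:\<alpha>:]"
  define n where "n = p ^ s"
  have g12: "g1 * g2 = [:- \<alpha>0, 0, 0, 0, 1:]" unfolding g1_def g2_def by (rule g12_ident[OF two assms(10)])
  have oddn: "odd n" using assms(2) by (simp add: n_def)
  have chp: "prime CHAR('a poly)" using ff(1) assms(1) by simp
  have "(monom 1 4 + (- [:\<alpha>0:])) ^ n = (monom 1 4) ^ n + (- [:\<alpha>0:]) ^ n"
    by (rule freshmans_dream'[OF chp]) (simp add: ff(1) n_def)
  also have "\<dots> = f"
    using oddn assms(9) by (simp add: f_def n_def monom_power poly_const_pow mult.commute)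
  finally have F: "(monom 1 4 + (- [:\<alpha>0:])) ^ n = f" .
  have G: "g1 * g2 = monom 1 4 + (- [:\<alpha>0:])" using g12 X_ident[of \<alpha>0] by (simp only: diff_conv_add_uminus)
  have "f = (g1 * g2) ^ n" by (simp only: G F)
  then have fdef: "f = g1 ^ n * g2 ^ n" by (simp add: power_mult_distrib)
  have npos: "n > 0" using ps by (simp add: n_def)
  have dg1: "degree g1 = 2" and dg2: "degree g2 = 2" by (simp_all add: g1_def g2_def)
  have nr1: "\<forall>r. poly g1 r \<noteq> 0" and nr2: "\<forall>r. poly g2 r \<noteq> 0"
    using noroot[OF two gnz ff(3)] by (simp_all add: g1_def g2_def)
  have P1: "\<And>x y. g1 dvd x*y \<Longrightarrow> g1 dvd x \<or> g1 dvd y" using prime_g[OF dg1 nr1] by blast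
  have P2: "\<And>x y. g2 dvd x*y \<Longrightarrow> g2 dvd x \<or> g2 dvd y" using prime_g[OF dg2 nr2] by blast
  have diff: "g1 - g2 = [:0, 2 * \<gamma>:]" by (simp add: g1_def g2_def)
  have nd21: "\<not> g2 dvd g1"
  proof
    assume "g2 dvd g1"
    then have "g2 dvd g1 - g2" by simp
    then have "degree g2 \<le> degree (g1 - g2)" using diff two gnz by (intro dvd_imp_degree_le) auto
    then show False using diff dg2 two gnz by simp
  qed
  have nd12: "\<not> g1 dvd g2"
  proof
    assume "g1 dvd g2"
    then have "g1 dvd g1 - g2" by simp
    then have "degree g1 \<le> degree (g1 - g2)" using diff two gnz by (intro dvd_imp_degree_le) auto
    then show False using diff dg1 two gnz by simp
  qed
  note A = C_all[OF fdef npos dg1 dg2 P1 P2 nd12 nd21 fin]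
  have degf: "degree f = 4 * n" by (rule C_degf[OF fdef npos dg1 dg2 P1 P2 nd12 nd21])
  have "(g1 * g2) mod f = g1 * g2"
    using degf ps3 g12 by (intro mod_poly_less) (simp add: n_def)
  then have nilp: "[:- \<alpha>0, 0, 0, 0, 1:] = (g1 * g2) mod f" using g12 by simp
  have cardeq: "card (UNIV :: 'a set) ^ (4 * p ^ s - 2 * i - 2 * j) = p ^ (m * (4 * p ^ s - 2 * i - 2 * j))" for i j
    using assms(5) by (simp add: power_mult)
  have Sf: "S = quot_poly_ring f" by (simp add: S_def f_def)
  note A2 = A[unfolded n_def, unfolded cardeq]
  show ?thesis unfolding Sf nilp by (rule A2)
qed


end
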